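(* Let $(B,D,d,\theta)$ be a regular E-system, $\mathcal A=\mathcal A_{B\to D}$ its associated Ann-category, $Q$ a ring, and $(F,\breve F,\widetilde F):\mathrm{Dis}\,Q\to\mathcal A$ an Ann-functor. Let $\psi:Q\to\operatorname{Coker}d$ be the ring homomorphism $u\mapsto$ (class of $F(u)$ in $D/\operatorname{Im}d$). Then there exists a ring extension of $B$ by $Q$ of type $B\to D$ inducing $\psi$.
   Context: Bimultiplications of a ring $A$ form the ring $M_A$; $\mu_c$ is the inner bimultiplication $a\mapsto ca$, $a\mapsto ac$; two bimultiplications $\sigma,\tau$ are permutable if $\sigma(a\tau)=(\sigma a)\tau$, $\tau(a\sigma)=(\tau a)\sigma$ for all $a$. E-system $(B,D,d,\theta)$: $B$ a ring, $D$ a unital ring, $d:B\to D$, $\theta:D\to M_B$ ring homomorphisms with $\theta d=\mu$, $d(\theta_xb)=x\,d(b)$, $d(b\theta_x)=d(b)x$; regular if $\theta(1)=1$ and elements of $\theta(D)$ are pairwise permutable. Morphism of E-systems $(f_1,f_0)$: ring homomorphisms with $f_0d=d'f_1$, $f_1(\theta_xb)=\theta'_{f_0(x)}f_1(b)$, $f_1(b\theta_x)=f_1(b)\theta'_{f_0(x)}$. Associated Ann-category $\mathcal A_{B\to D}$: objects elements of $D$, morphisms $x\to y$ the $b\in B$ with $y=d(b)+x$, composition by addition, $\oplus,\otimes$ given by $+,\cdot$ on objects and by $b+b'$, $bb'+b\theta_{x'}+\theta_xb'$ on morphisms $x\xrightarrow{b}y$, $x'\xrightarrow{b'}y'$, all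 constraints identities. $\mathrm{Dis}\,Q$ is the strict Ann-category with objects the elements of $Q$, only identity morphisms, $\oplus,\otimes$ the ring operations. An Ann-functor is a functor with natural isomorphisms $\breve F:F(X\oplus Y)\to FX\oplus FY$, $\widetilde F:F(X\otimes Y)\to FX\otimes FY$ making it symmetric monoidal for $\oplus$, monoidal for $\otimes$, compatible with distributivity constraints. A ring extension of $B$ by $Q$ of type $B\to D$ is an exact sequence of ring homomorphisms $0\to B\xrightarrow{j}E\xrightarrow{p}Q\to0$ together with a ring homomorphism $\varepsilon:E\to D$ such that $(B,E,j,\theta')$ is an E-system with $\theta'$ of bimultiplication type ($\theta'_e b=eb$, $b\theta'_e=be$ computed in $E$, $B$ identified with $j(B)$) and $(\mathrm{id}_B,\varepsilon)$ is a morphism of E-systems $(B,E,j,\theta')\to(B,D,d,\theta)$. It induces the unique ring homomorphism $\psi:Q\to\operatorname{Coker}d$ with $\psi\circ p=q\circ\varepsilon$, $q:D\to\operatorname{Coker}d=D/\operatorname{Im}d$ the projection. *)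

theory Defs
  imports "HOL-Algebra.Ring"
begin

definition rhom :: "('a::ring \<Rightarrow> 'c::ring) \<Rightarrow> bool" where
  "rhom f \<longleftrightarrow> (\<forall>x y. f (x + y) = f x + f y \<and> f (x * y) = f x * f y)"

text \<open>A bimultiplication sigma of B is a pair (L, R) of maps, L a = sigma a and R a = a sigma.\<close>
definition bimult :: "('b::ring \<Rightarrow> 'b) \<Rightarrow> ('b \<Rightarrow> 'b) \<Rightarrow> bool" where
  "bimult L R \<longleftrightarrow> (\<forall>a b. L (a + b) = L a + L b \<and> R (a + b) = R a + R b
      \<and> L (a * b) = L a * b \<and> R (a * b) = a * R b \<and> a * L b = R a * b)"

text \<open>E-system (B,D,d,theta); thL x b = theta_x b, thR x b = b theta_x.
  Ring structure of M_B: (sigma tau) a = sigma (tau a), a (sigma tau) = (a sigma) tau.\<close>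
definition e_system :: "('b::ring \<Rightarrow> 'd::ring_1) \<Rightarrow> ('d \<Rightarrow> 'b \<Rightarrow> 'b) \<Rightarrow> ('d \<Rightarrow> 'b \<Rightarrow> 'b) \<Rightarrow> bool" where
  "e_system d thL thR \<longleftrightarrow>
     rhom d
   \<and> (\<forall>x. bimult (thL x) (thR x))
   \<and> (\<forall>x y b. thL (x + y) b = thL x b + thL y b \<and> thR (x + y) b = thR x b + thR y b
             \<and> thL (x * y) b = thL x (thL y b) \<and> thR (x * y) b = thR y (thR x b))
   \<and> (\<forall>c b. thL (d c) b = c * b \<and> thR (d c) b = b * c)
   \<and> (\<forall>x b. d (thL x b) = x * d b \<and> d (thR x b) = d b * x)"

definition regular :: "('d::ring_1 \<Rightarrow> 'b::ring \<Rightarrow> 'b) \<Rightarrow> ('d \<Rightarrow> 'b \<Rightarrow> 'b) \<Rightarrow> bool" where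
  "regular thL thR \<longleftrightarrow>
     (\<forall>b. thL 1 b = b \<and> thR 1 b = b)
   \<and> (\<forall>x y b. thL x (thR y b) = thR y (thL x b))"

text \<open>Tensor of morphisms in A_{B->D}: for x --b--> y, x' --b'--> y',
  the morphism b b' + b theta_{x'} + theta_x b'.  Composition of morphisms is +,
  identities are 0, the oplus of morphisms is +.\<close>
definition mtens :: "('d::ring_1 \<Rightarrow> 'b::ring \<Rightarrow> 'b) \<Rightarrow> ('d \<Rightarrow> 'b \<Rightarrow> 'b) \<Rightarrow> 'd \<Rightarrow> 'd \<Rightarrow> 'b \<Rightarrow> 'b \<Rightarrow> 'b" where
  "mtens thL thR x x' b b' = b * b' + thR x' b + thL x b'"

text \<open>Fb u v : F(u+v) \<rightarrow> F u + F v,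
  Ft u v : F(u v) \<rightarrow> F u * F v (morphisms of A are elements of B).  Since Dis Q is discrete,
  functoriality and naturality are automatic.  All constraints of both categories are
  identities, so the coherence diagrams become the equations below.\<close>
definition ann_functor ::
  "('b::ring \<Rightarrow> 'd::ring_1) \<Rightarrow> ('d \<Rightarrow> 'b \<Rightarrow> 'b) \<Rightarrow> ('d \<Rightarrow> 'b \<Rightarrow> 'b)
   \<Rightarrow> ('q::ring_1 \<Rightarrow> 'd) \<Rightarrow> ('q \<Rightarrow> 'q \<Rightarrow> 'b) \<Rightarrow> ('q \<Rightarrow> 'q \<Rightarrow> 'b) \<Rightarrow> bool" where
  "ann_functor d thL thR F Fb Ft \<longleftrightarrow>
     \<comment> \<open>Fb u v and Ft u v are morphisms with the right source and target\<close>
     (\<forall>u v. F u + F v = d (Fb u v) + F (u + v))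
   \<and> (\<forall>u v. F u * F v = d (Ft u v) + F (u * v))
     \<comment> \<open>symmetric monoidal for oplus: associativity, commutativity, unit\<close>
   \<and> (\<forall>u v w. Fb (u + v) w + (Fb u v + 0) = Fb u (v + w) + (0 + Fb v w))
   \<and> (\<forall>u v. Fb u v = Fb v u)
   \<and> (\<exists>c. F 0 = d c + 0 \<and> (\<forall>u. Fb u 0 + (0 + - c) = 0 \<and> Fb 0 u + (- c + 0) = 0))
     \<comment> \<open>monoidal for otimes: associativity, unit\<close>
   \<and> (\<forall>u v w. Ft (u * v) w + mtens thL thR (F (u * v)) (F w) (Ft u v) 0
              = Ft u (v * w) + mtens thL thR (F u) (F (v * w)) 0 (Ft v w))
   \<and> (\<exists>c. F 1 = d c + 1 \<and> (\<forall>u. Ft u 1 + mtens thL thR (F u) (F 1) 0 (- c) = 0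
                              \<and> Ft 1 u + mtens thL thR (F 1) (F u) (- c) 0 = 0))
     \<comment> \<open>compatibility with the (left and right) distributivity constraints\<close>
   \<and> (\<forall>u v w. Ft u (v + w) + mtens thL thR (F u) (F (v + w)) 0 (Fb v w)
              = Fb (u * v) (u * w) + (Ft u v + Ft u w))
   \<and> (\<forall>u v w. Ft (u + v) w + mtens thL thR (F (u + v)) (F w) (Fb u v) 0
              = Fb (u * w) (v * w) + (Ft u w + Ft v w))"

text \<open>Ring extension 0 \<rightarrow> B --j--> E --p--> Q \<rightarrow> 0 of type B \<rightarrow> D, with eps : E \<rightarrow> D.
  E is a (unital) ring in the sense of HOL-Algebra.  theta' of bimultiplication type.\<close>
definition thL' :: "('e, 'm) ring_scheme \<Rightarrow> ('b \<Rightarrow> 'e) \<Rightarrow> 'e \<Rightarrow> 'b \<Rightarrow> 'b" where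
  "thL' E j e b = the_inv j (e \<otimes>\<^bsub>E\<^esub> j b)"

definition thR' :: "('e, 'm) ring_scheme \<Rightarrow> ('b \<Rightarrow> 'e) \<Rightarrow> 'e \<Rightarrow> 'b \<Rightarrow> 'b" where
  "thR' E j e b = the_inv j (j b \<otimes>\<^bsub>E\<^esub> e)"

definition ring_extension ::
  "('b::ring \<Rightarrow> 'd::ring_1) \<Rightarrow> ('d \<Rightarrow> 'b \<Rightarrow> 'b) \<Rightarrow> ('d \<Rightarrow> 'b \<Rightarrow> 'b)
   \<Rightarrow> ('e, 'm) ring_scheme \<Rightarrow> ('b \<Rightarrow> 'e) \<Rightarrow> ('e \<Rightarrow> 'q::ring_1) \<Rightarrow> ('e \<Rightarrow> 'd) \<Rightarrow> bool" where
  "ring_extension d thL thR E j p eps \<longleftrightarrow>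
     ring E
     \<comment> \<open>j, p, eps ring homomorphisms\<close>
   \<and> (\<forall>b. j b \<in> carrier E)
   \<and> (\<forall>a b. j (a + b) = j a \<oplus>\<^bsub>E\<^esub> j b \<and> j (a * b) = j a \<otimes>\<^bsub>E\<^esub> j b)
   \<and> (\<forall>e\<in>carrier E. \<forall>e'\<in>carrier E. p (e \<oplus>\<^bsub>E\<^esub> e') = p e + p e' \<and> p (e \<otimes>\<^bsub>E\<^esub> e') = p e * p e')
   \<and> (\<forall>e\<in>carrier E. \<forall>e'\<in>carrier E. eps (e \<oplus>\<^bsub>E\<^esub> e') = eps e + eps e' \<and> eps (e \<otimes>\<^bsub>E\<^esub> e') = eps e * eps e')
     \<comment> \<open>exactness\<close>
   \<and> inj j
   \<and> range j = {e \<in> carrier E. p e = 0}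
   \<and> p ` carrier E = UNIV
     \<comment> \<open>(B, E, j, theta') is an E-system, theta' of bimultiplication type\<close>
   \<and> (\<forall>e\<in>carrier E. bimult (thL' E j e) (thR' E j e))
   \<and> (\<forall>e\<in>carrier E. \<forall>e'\<in>carrier E. \<forall>b.
          thL' E j (e \<oplus>\<^bsub>E\<^esub> e') b = thL' E j e b + thL' E j e' b
        \<and> thR' E j (e \<oplus>\<^bsub>E\<^esub> e') b = thR' E j e b + thR' E j e' b
        \<and> thL' E j (e \<otimes>\<^bsub>E\<^esub> e') b = thL' E j e (thL' E j e' b)
        \<and> thR' E j (e \<otimes>\<^bsub>E\<^esub> e') b = thR' E j e' (thR' E j e b))
   \<and> (\<forall>c b. thL' E j (j c) b = c * b \<and> thR' E j (j c) b = b * c)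
   \<and> (\<forall>e\<in>carrier E. \<forall>b. j (thL' E j e b) = e \<otimes>\<^bsub>E\<^esub> j b \<and> j (thR' E j e b) = j b \<otimes>\<^bsub>E\<^esub> e)
     \<comment> \<open>(id_B, eps) is a morphism of E-systems to (B, D, d, theta)\<close>
   \<and> (\<forall>b. eps (j b) = d b)
   \<and> (\<forall>e\<in>carrier E. \<forall>b. thL' E j e b = thL (eps e) b \<and> thR' E j e b = thR (eps e) b)"

text \<open>The extension induces psi : Q \<rightarrow> Coker d, psi u = class of F u, i.e.
  psi o p = q o eps, where q : D \<rightarrow> D / Im d.\<close>
definition induces_psi :: "('b::ring \<Rightarrow> 'd::ring_1) \<Rightarrow> ('q::ring_1 \<Rightarrow> 'd)
    \<Rightarrow> ('e, 'm) ring_scheme \<Rightarrow> ('e \<Rightarrow> 'q) \<Rightarrow> ('e \<Rightarrow> 'd) \<Rightarrow> bool" where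
  "induces_psi d F E p eps \<longleftrightarrow> (\<forall>e\<in>carrier E. eps e - F (p e) \<in> range d)"

end

theory Submission
  imports Defs
begin

locale ctx =
  fixes d :: "'b::ring \<Rightarrow> 'd::ring_1"
    and thL thR :: "'d \<Rightarrow> 'b \<Rightarrow> 'b"
    and F :: "'q::ring_1 \<Rightarrow> 'd"
    and Fb Ft :: "'q \<Rightarrow> 'q \<Rightarrow> 'b"
  assumes es: "e_system d thL thR"
    and rg: "regular thL thR"
    and af: "ann_functor d thL thR F Fb Ft"
begin

lemma d_add[simp]: "d (a + b) = d a + d b" using es unfolding e_system_def rhom_def by blast
lemma d_mult[simp]: "d (a * b) = d a * d b" using es unfolding e_system_def rhom_def by blast
lemma d_0[simp]: "d 0 = 0" using d_add[of 0 0] by simp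
lemma d_minus[simp]: "d (- a) = - d a" by (rule minus_unique[symmetric]) (use d_add[of a "-a"] in simp)
lemma d_diff[simp]: "d (a - b) = d a - d b" by (metis d_add d_minus diff_conv_add_uminus)

lemma bm: "bimult (thL x) (thR x)" using es unfolding e_system_def by blast
lemma L_add2[simp]: "thL x (a + b) = thL x a + thL x b" using bm unfolding bimult_def by blast
lemma R_add2[simp]: "thR x (a + b) = thR x a + thR x b" using bm unfolding bimult_def by blast
lemma L_mult2[simp]: "thL x (a * b) = thL x a * b" using bm unfolding bimult_def by blast
lemma R_mult2[simp]: "thR x (a * b) = a * thR x b" using bm unfolding bimult_def by blast
lemma LR_assoc: "a * thL x b = thR x a * b" using bm unfolding bimult_def by blast
lemma L_02[simp]: "thL x 0 = 0" using L_add2[of x 0 0] by simp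
lemma R_02[simp]: "thR x 0 = 0" using R_add2[of x 0 0] by simp
lemma L_minus2[simp]: "thL x (- a) = - thL x a" by (rule minus_unique[symmetric]) (use L_add2[of x a "-a"] in simp)
lemma R_minus2[simp]: "thR x (- a) = - thR x a" by (rule minus_unique[symmetric]) (use R_add2[of x a "-a"] in simp)
lemma L_diff2[simp]: "thL x (a - b) = thL x a - thL x b" by (metis L_add2 L_minus2 diff_conv_add_uminus)
lemma R_diff2[simp]: "thR x (a - b) = thR x a - thR x b" by (metis R_add2 R_minus2 diff_conv_add_uminus)

lemma L_add1[simp]: "thL (x + y) b = thL x b + thL y b" using es unfolding e_system_def by blast
lemma R_add1[simp]: "thR (x + y) b = thR x b + thR y b" using es unfolding e_system_def by blast
lemma L_mult1: "thL (x * y) b = thL x (thL y b)" using es unfolding e_system_def by blast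
lemma R_mult1: "thR (x * y) b = thR y (thR x b)" using es unfolding e_system_def by blast
lemma L_01[simp]: "thL 0 b = 0" using L_add1[of 0 0 b] by simp
lemma R_01[simp]: "thR 0 b = 0" using R_add1[of 0 0 b] by simp
lemma L_minus1[simp]: "thL (- x) b = - thL x b" by (rule minus_unique[symmetric]) (use L_add1[of x "-x" b] in simp)
lemma R_minus1[simp]: "thR (- x) b = - thR x b" by (rule minus_unique[symmetric]) (use R_add1[of x "-x" b] in simp)
lemma L_diff1[simp]: "thL (x - y) b = thL x b - thL y b" by (metis L_add1 L_minus1 diff_conv_add_uminus)
lemma R_diff1[simp]: "thR (x - y) b = thR x b - thR y b" by (metis R_add1 R_minus1 diff_conv_add_uminus)
lemma L_d[simp]: "thL (d c) b = c * b" using es unfolding e_system_def by blast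
lemma R_d[simp]: "thR (d c) b = b * c" using es unfolding e_system_def by blast
lemma d_L[simp]: "d (thL x b) = x * d b" using es unfolding e_system_def by blast
lemma d_R[simp]: "d (thR x b) = d b * x" using es unfolding e_system_def by blast
lemma L_1[simp]: "thL 1 b = b" using rg unfolding regular_def by blast
lemma R_1[simp]: "thR 1 b = b" using rg unfolding regular_def by blast
lemma LR_comm: "thL x (thR y b) = thR y (thL x b)" using rg unfolding regular_def by blast

lemma Fb_F: "F u + F v = d (Fb u v) + F (u + v)" using af unfolding ann_functor_def by blast
lemma Ft_F: "F u * F v = d (Ft u v) + F (u * v)" using af unfolding ann_functor_def by blast
lemma Fb_assoc: "Fb (u + v) w + Fb u v = Fb u (v + w) + Fb v w"
proof -
  have "\<forall>u v w. Fb (u + v) w + (Fb u v + 0) = Fb u (v + w) + (0 + Fb v w)"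
    using af unfolding ann_functor_def by blast
  then show ?thesis by simp
qed
lemma Fb_comm: "Fb u v = Fb v u" using af unfolding ann_functor_def by blast
lemma Ft_assoc: "Ft (u * v) w + thR (F w) (Ft u v) = Ft u (v * w) + thL (F u) (Ft v w)"
  using af unfolding ann_functor_def mtens_def by simp
lemma Ft_distl: "Ft u (v + w) + thL (F u) (Fb v w) = Fb (u * v) (u * w) + (Ft u v + Ft u w)"
  using af unfolding ann_functor_def mtens_def by simp
lemma Ft_distr: "Ft (u + v) w + thR (F w) (Fb u v) = Fb (u * w) (v * w) + (Ft u w + Ft v w)"
  using af unfolding ann_functor_def mtens_def by simp

definition c0 where "c0 = (SOME c. F 0 = d c + 0 \<and> (\<forall>u. Fb u 0 + (0 + - c) = 0 \<and> Fb 0 u + (- c + 0) = 0))"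
definition c1 where "c1 = (SOME c. F 1 = d c + 1 \<and> (\<forall>u. Ft u 1 + mtens thL thR (F u) (F 1) 0 (- c) = 0
                              \<and> Ft 1 u + mtens thL thR (F 1) (F u) (- c) 0 = 0))"

lemma c0_prop: "F 0 = d c0 + 0 \<and> (\<forall>u. Fb u 0 + (0 + - c0) = 0 \<and> Fb 0 u + (- c0 + 0) = 0)"
  unfolding c0_def by (rule someI_ex) (insert af, unfold ann_functor_def, blast)
lemma c1_prop: "F 1 = d c1 + 1 \<and> (\<forall>u. Ft u 1 + mtens thL thR (F u) (F 1) 0 (- c1) = 0
                              \<and> Ft 1 u + mtens thL thR (F 1) (F u) (- c1) 0 = 0)"
  unfolding c1_def by (rule someI_ex) (insert af, unfold ann_functor_def, blast)

lemma F0: "F 0 = d c0" using c0_prop by simp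
lemma Fb0r[simp]: "Fb u 0 = c0" using c0_prop by (simp add: add_eq_0_iff2)
lemma Fb0l[simp]: "Fb 0 u = c0" using c0_prop by (simp add: add_eq_0_iff2)
lemma F1: "F 1 = d c1 + 1" using c1_prop by simp
lemma Ft1r[simp]: "Ft u 1 = thL (F u) c1" using c1_prop by (simp add: mtens_def add_eq_0_iff2)
lemma Ft1l[simp]: "Ft 1 u = thR (F u) c1" using c1_prop by (simp add: mtens_def add_eq_0_iff2)
lemma Ft0r[simp]: "Ft u 0 = thL (F u) c0 - c0"
  using Ft_distl[of u 0 0] by (simp add: algebra_simps)
lemma Ft0l[simp]: "Ft 0 u = thR (F u) c0 - c0"
  using Ft_distr[of 0 0 u] by (simp add: algebra_simps)

lemma RF_add: "thR (F (v + w)) a = thR (F v) a + thR (F w) a - a * Fb v w"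
  using arg_cong[OF Fb_F[of v w], of "\<lambda>x. thR x a"] by (simp add: algebra_simps)
lemma LF_add: "thL (F (v + w)) a = thL (F v) a + thL (F w) a - Fb v w * a"
  using arg_cong[OF Fb_F[of v w], of "\<lambda>x. thL x a"] by (simp add: algebra_simps)
lemma RF_mult: "thR (F (v * w)) a = thR (F w) (thR (F v) a) - a * Ft v w"
  using arg_cong[OF Ft_F[of v w], of "\<lambda>x. thR x a"] by (simp add: algebra_simps R_mult1)
lemma LF_mult: "thL (F (v * w)) a = thL (F v) (thL (F w) a) - Ft v w * a"
  using arg_cong[OF Ft_F[of v w], of "\<lambda>x. thL x a"] by (simp add: algebra_simps L_mult1)

definition EE :: "('b \<times> 'q) ring" where
  "EE = \<lparr>carrier = UNIV,
     mult = (\<lambda>x y. (fst x * fst y + thR (F (snd y)) (fst x) + thL (F (snd x)) (fst y) + Ft (snd x) (snd y), snd x * snd y)),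
     one = (- c1, 1), zero = (- c0, 0),
     add = (\<lambda>x y. (fst x + fst y + Fb (snd x) (snd y), snd x + snd y))\<rparr>"

lemma EE_carrier[simp]: "carrier EE = UNIV" by (simp add: EE_def)
lemma EE_add[simp]: "(a, u) \<oplus>\<^bsub>EE\<^esub> (b, v) = (a + b + Fb u v, u + v)" by (simp add: EE_def)
lemma EE_mult[simp]: "(a, u) \<otimes>\<^bsub>EE\<^esub> (b, v) = (a * b + thR (F v) a + thL (F u) b + Ft u v, u * v)" by (simp add: EE_def)
lemma EE_one[simp]: "\<one>\<^bsub>EE\<^esub> = (- c1, 1)" by (simp add: EE_def)
lemma EE_zero[simp]: "\<zero>\<^bsub>EE\<^esub> = (- c0, 0)" by (simp add: EE_def)

lemma Ft_assoc': "Ft (u * v) w = Ft u (v * w) + thL (F u) (Ft v w) - thR (F w) (Ft u v)"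
  using Ft_assoc[of u v w] by (simp add: algebra_simps)

lemma massoc: "((a, u) \<otimes>\<^bsub>EE\<^esub> (b, v)) \<otimes>\<^bsub>EE\<^esub> (e, w) = (a, u) \<otimes>\<^bsub>EE\<^esub> ((b, v) \<otimes>\<^bsub>EE\<^esub> (e, w))"
  by (simp add: LF_mult RF_mult LR_comm LR_assoc Ft_assoc' algebra_simps)

lemma aassoc: "((a, u) \<oplus>\<^bsub>EE\<^esub> (b, v)) \<oplus>\<^bsub>EE\<^esub> (e, w) = (a, u) \<oplus>\<^bsub>EE\<^esub> ((b, v) \<oplus>\<^bsub>EE\<^esub> (e, w))"
  using Fb_assoc[of u v w] by (simp add: algebra_simps)

lemma acomm: "(a, u) \<oplus>\<^bsub>EE\<^esub> (b, v) = (b, v) \<oplus>\<^bsub>EE\<^esub> (a, u)"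
  using Fb_comm[of u v] by (simp add: algebra_simps)

lemma aassoc': "(x \<oplus>\<^bsub>EE\<^esub> y) \<oplus>\<^bsub>EE\<^esub> z = x \<oplus>\<^bsub>EE\<^esub> (y \<oplus>\<^bsub>EE\<^esub> z)"
  by (cases x; cases y; cases z) (simp only: aassoc)
lemma acomm': "x \<oplus>\<^bsub>EE\<^esub> y = y \<oplus>\<^bsub>EE\<^esub> x"
  by (cases x; cases y) (simp only: acomm)

lemma ldistr: "((a, u) \<oplus>\<^bsub>EE\<^esub> (b, v)) \<otimes>\<^bsub>EE\<^esub> (e, w) = (a, u) \<otimes>\<^bsub>EE\<^esub> (e, w) \<oplus>\<^bsub>EE\<^esub> (b, v) \<otimes>\<^bsub>EE\<^esub> (e, w)"
  using Ft_distr[of u v w] by (simp add: LF_add algebra_simps)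

lemma rdistr: "(e, w) \<otimes>\<^bsub>EE\<^esub> ((a, u) \<oplus>\<^bsub>EE\<^esub> (b, v)) = (e, w) \<otimes>\<^bsub>EE\<^esub> (a, u) \<oplus>\<^bsub>EE\<^esub> (e, w) \<otimes>\<^bsub>EE\<^esub> (b, v)"
  using Ft_distl[of w u v] by (simp add: RF_add algebra_simps)

lemma lone: "\<one>\<^bsub>EE\<^esub> \<otimes>\<^bsub>EE\<^esub> (a, u) = (a, u)"
  by (simp add: F1 algebra_simps)
lemma rone: "(a, u) \<otimes>\<^bsub>EE\<^esub> \<one>\<^bsub>EE\<^esub> = (a, u)"
  by (simp add: F1 algebra_simps)
lemma lzero: "\<zero>\<^bsub>EE\<^esub> \<oplus>\<^bsub>EE\<^esub> (a, u) = (a, u)"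
  by simp

lemma EE_ring: "ring EE"
proof (rule ringI)
  show "abelian_group EE"
  proof (rule abelian_groupI)
    fix x assume "x \<in> carrier EE"
    obtain a u where x: "x = (a, u)" by fastforce
    show "\<exists>y\<in>carrier EE. y \<oplus>\<^bsub>EE\<^esub> x = \<zero>\<^bsub>EE\<^esub>"
      by (rule bexI[of _ "(- c0 - a - Fb (- u) u, - u)"]) (auto simp: x)
  next
    fix x y z :: "'b \<times> 'q"
    show "(x \<oplus>\<^bsub>EE\<^esub> y) \<oplus>\<^bsub>EE\<^esub> z = x \<oplus>\<^bsub>EE\<^esub> (y \<oplus>\<^bsub>EE\<^esub> z)" by (rule aassoc')
  next
    fix x y :: "'b \<times> 'q"
    show "x \<oplus>\<^bsub>EE\<^esub> y = y \<oplus>\<^bsub>EE\<^esub> x" by (rule acomm')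
  next
    fix x :: "'b \<times> 'q"
    show "\<zero>\<^bsub>EE\<^esub> \<oplus>\<^bsub>EE\<^esub> x = x" by (cases x) simp
  qed auto
  show "monoid EE"
    by (rule monoidI) (auto simp: massoc lone rone simp del: EE_mult EE_one)
qed (auto simp: ldistr rdistr simp del: EE_mult EE_add)

definition jj :: "'b \<Rightarrow> 'b \<times> 'q" where "jj b = (b - c0, 0)"
definition eps :: "'b \<times> 'q \<Rightarrow> 'd" where "eps x = d (fst x) + F (snd x)"

lemma inj_jj: "inj jj" by (auto simp: inj_def jj_def)

lemma mult_jj: "(a, u) \<otimes>\<^bsub>EE\<^esub> jj b = jj (thL (eps (a, u)) b)"
  by (simp add: jj_def eps_def F0 algebra_simps)
lemma jj_mult: "jj b \<otimes>\<^bsub>EE\<^esub> (a, u) = jj (thR (eps (a, u)) b)"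
  by (simp add: jj_def eps_def F0 LR_assoc algebra_simps)

lemma thL'_eq: "thL' EE jj x b = thL (eps x) b"
  using mult_jj[of "fst x" "snd x" b] inj_jj unfolding thL'_def by (simp add: the_inv_f_f)
lemma thR'_eq: "thR' EE jj x b = thR (eps x) b"
  using jj_mult[of b "fst x" "snd x"] inj_jj unfolding thR'_def by (simp add: the_inv_f_f)

lemma eps_add: "eps (x \<oplus>\<^bsub>EE\<^esub> y) = eps x + eps y"
  using Fb_F[of "snd x" "snd y"] by (cases x; cases y) (simp add: eps_def algebra_simps)
lemma eps_mult: "eps (x \<otimes>\<^bsub>EE\<^esub> y) = eps x * eps y"
  using Ft_F[of "snd x" "snd y"] by (cases x; cases y) (simp add: eps_def algebra_simps)
lemma eps_jj: "eps (jj b) = d b" by (simp add: eps_def jj_def F0)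

lemma jj_add: "jj (a + b) = jj a \<oplus>\<^bsub>EE\<^esub> jj b" by (simp add: jj_def algebra_simps)
lemma jj_mult': "jj (a * b) = jj a \<otimes>\<^bsub>EE\<^esub> jj b"
  by (metis mult_jj eps_jj L_d prod.collapse)
lemma snd_add: "snd (x \<oplus>\<^bsub>EE\<^esub> y) = snd x + snd y" by (cases x; cases y) simp
lemma snd_mult: "snd (x \<otimes>\<^bsub>EE\<^esub> y) = snd x * snd y" by (cases x; cases y) simp
lemma jj_thL: "jj (thL' EE jj x b) = x \<otimes>\<^bsub>EE\<^esub> jj b"
  by (metis mult_jj thL'_eq prod.collapse)
lemma jj_thR: "jj (thR' EE jj x b) = jj b \<otimes>\<^bsub>EE\<^esub> x"
  by (metis jj_mult thR'_eq prod.collapse)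

lemma thL'_fun: "thL' EE jj x = thL (eps x)" using thL'_eq by blast
lemma thR'_fun: "thR' EE jj x = thR (eps x)" using thR'_eq by blast

lemma ext_ok: "ring_extension d thL thR EE jj snd eps"
  unfolding ring_extension_def
proof (intro conjI ballI allI)
  show "ring EE" by (rule EE_ring)
  show "inj jj" by (rule inj_jj)
  show "range jj = {e \<in> carrier EE. snd e = 0}"
  proof
    show "range jj \<subseteq> {e \<in> carrier EE. snd e = 0}" by (auto simp: jj_def)
    show "{e \<in> carrier EE. snd e = 0} \<subseteq> range jj"
    proof
      fix e assume "e \<in> {e \<in> carrier EE. snd e = 0}"
      then have "e = jj (fst e + c0)" by (cases e) (simp add: jj_def)
      then show "e \<in> range jj" by blast
    qed
  qed
  show "snd ` carrier EE = UNIV" by (auto simp: image_def intro!: exI[of _ "(0, _)"])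
qed (auto simp: thL'_eq thR'_eq eps_add eps_mult eps_jj bm L_mult1 R_mult1 jj_add jj_mult'
    snd_add snd_mult jj_thL jj_thR mult_jj[symmetric] jj_mult[symmetric] thL'_fun thR'_fun simp del: EE_mult EE_add)

lemma psi: "induces_psi d F EE snd eps"
  unfolding induces_psi_def eps_def by auto

end

theorem mainTheorem7:
  fixes d :: "'b::ring \<Rightarrow> 'd::ring_1"
    and thL thR :: "'d \<Rightarrow> 'b \<Rightarrow> 'b"
    and F :: "'q::ring_1 \<Rightarrow> 'd"
    and Fb Ft :: "'q \<Rightarrow> 'q \<Rightarrow> 'b"
  assumes "e_system d thL thR"
    and "regular thL thR"
    and "ann_functor d thL thR F Fb Ft"
  shows "\<exists>(E :: ('b \<times> 'q) ring) j p eps.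
           ring_extension d thL thR E j p eps \<and> induces_psi d F E p eps"
proof -
  interpret ctx d thL thR F Fb Ft using assms by (rule ctx.intro)
  show ?thesis using ext_ok psi by blast
qed

end
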